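(* Let $k\ge 1$ and let $L=(l_1,\ldots,l_k)$ be a sequence of positive integers in spider order, and let $S=S(L)$ be the spider defined by $L$. Let $t$ be an integer with $1\le t\le \alpha(S)$. Then for each $1\le i<j\le k$ we have $$|\mathcal{I}^t_{v_{i,l_i}}(S)|\ge |\mathcal{I}^t_{v_{j,l_j}}(S)|.$$
   Context: For a graph $G$, $\alpha(G)$ is the maximum size of an independent set in $G$, and for an integer $t\le\alpha(G)$, $\mathcal{I}^t(G)$ denotes the family of all independent sets of $G$ of size $t$. For a vertex $x$, $\mathcal{I}^t_x(G)$ denotes the subfamily of sets in $\mathcal{I}^t(G)$ containing $x$ (the star centered at $x$). Given a sequence of positive integers $L=(l_1,\ldots,l_k)$, the spider $S(L)$ is the tree consisting of a head vertex $v_0$ and, for each $1\le i\le k$, a leg which is the path $v_0,v_{i,1},v_{i,2},\ldots,v_{i,l_i}$; distinct legs share only $v_0$. The sequence $L$ is in spider order if: (1) whenever $l_i$ and $l_j$ are both odd and $l_i<l_j$, then $i<j$; (2) whenever $l_i$ and $l_j$ are both even and $l_i<l_j$, then $i>j$; (3) whenever $l_i$ is odd and $l_j$ is even, then $i<j$. *)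

theory Defs
  imports Main
begin

definition indep_set :: "'a set \<Rightarrow> ('a \<Rightarrow> 'a \<Rightarrow> bool) \<Rightarrow> 'a set \<Rightarrow> bool" where
  "indep_set V E I \<longleftrightarrow> I \<subseteq> V \<and> (\<forall>x\<in>I. \<forall>y\<in>I. \<not> E x y)"

definition indep_number :: "'a set \<Rightarrow> ('a \<Rightarrow> 'a \<Rightarrow> bool) \<Rightarrow> nat" where
  "indep_number V E = Max {card I | I. indep_set V E I}"

definition indep_sets_of_size :: "'a set \<Rightarrow> ('a \<Rightarrow> 'a \<Rightarrow> bool) \<Rightarrow> nat \<Rightarrow> 'a set set" where
  "indep_sets_of_size V E t = {I. indep_set V E I \<and> card I = t}"

definition indep_star :: "'a set \<Rightarrow> ('a \<Rightarrow> 'a \<Rightarrow> bool) \<Rightarrow> nat \<Rightarrow> 'a \<Rightarrow> 'a set set" where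
  "indep_star V E t x = {I \<in> indep_sets_of_size V E t. x \<in> I}"

(* Spider S(L), L = [l_1,...,l_k] (list index i-1 holds l_i).
   Head v_0 = (0,0); leg vertex v_{i,j} = (i,j) for 1 <= i <= k, 1 <= j <= l_i. *)
definition spider_verts :: "nat list \<Rightarrow> (nat \<times> nat) set" where
  "spider_verts L = {(0,0)} \<union> {(i,j). 1 \<le> i \<and> i \<le> length L \<and> 1 \<le> j \<and> j \<le> L ! (i-1)}"

definition spider_adj :: "nat list \<Rightarrow> nat \<times> nat \<Rightarrow> nat \<times> nat \<Rightarrow> bool" where
  "spider_adj L u v \<longleftrightarrow> u \<in> spider_verts L \<and> v \<in> spider_verts L \<and>
     ((u = (0,0) \<and> fst v \<ge> 1 \<and> snd v = 1) \<or>
      (v = (0,0) \<and> fst u \<ge> 1 \<and> snd u = 1) \<or>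
      (fst u \<ge> 1 \<and> fst u = fst v \<and> (snd v = snd u + 1 \<or> snd u = snd v + 1)))"

definition spider_order :: "nat list \<Rightarrow> bool" where
  "spider_order L \<longleftrightarrow> (\<forall>i j. 1 \<le> i \<and> i \<le> length L \<and> 1 \<le> j \<and> j \<le> length L \<longrightarrow>
      (odd (L!(i-1)) \<and> odd (L!(j-1)) \<and> L!(i-1) < L!(j-1) \<longrightarrow> i < j) \<and>
      (even (L!(i-1)) \<and> even (L!(j-1)) \<and> L!(i-1) < L!(j-1) \<longrightarrow> i > j) \<and>
      (odd (L!(i-1)) \<and> even (L!(j-1)) \<longrightarrow> i < j))"

end

theory Submission
  imports Defs "HOL-Computational_Algebra.Polynomial"
begin


definition gp :: "'a set set \<Rightarrow> int poly" where
  "gp S = (\<Sum>A\<in>S. monom 1 (card A))"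

lemma coeff_gp: "finite S \<Longrightarrow> coeff (gp S) s = int (card {A\<in>S. card A = s})"
  unfolding gp_def by (simp add: coeff_sum coeff_monom sum.If_cases Int_def)

definition nonneg :: "int poly \<Rightarrow> bool" where
  "nonneg P \<longleftrightarrow> (\<forall>i. coeff P i \<ge> 0)"

lemma nonneg_add: "nonneg P \<Longrightarrow> nonneg Q \<Longrightarrow> nonneg (P + Q)"
  by (simp add: nonneg_def)

lemma nonneg_mult: "nonneg P \<Longrightarrow> nonneg Q \<Longrightarrow> nonneg (P * Q)"
  unfolding nonneg_def by (auto simp: coeff_mult intro!: sum_nonneg)

lemma nonneg_gp: "nonneg (gp S)"
  unfolding nonneg_def gp_def by (auto simp: coeff_sum coeff_monom intro!: sum_nonneg)

lemma nonneg_monom: "nonneg (monom 1 k)"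
  unfolding nonneg_def by (simp add: coeff_monom)

lemma nonneg_0: "nonneg 0" by (simp add: nonneg_def)
lemma nonneg_1: "nonneg 1" by (simp add: nonneg_def coeff_1)

lemma gp_union: "finite A \<Longrightarrow> finite B \<Longrightarrow> A \<inter> B = {} \<Longrightarrow> gp (A \<union> B) = gp A + gp B"
  unfolding gp_def by (rule sum.union_disjoint)

lemma gp_diff: "finite A \<Longrightarrow> B \<subseteq> A \<Longrightarrow> gp (A - B) = gp A - gp B"
  unfolding gp_def by (simp add: sum_diff finite_subset)

lemma gp_empty[simp]: "gp {} = 0" by (simp add: gp_def)
lemma gp_sing[simp]: "gp {A} = monom 1 (card A)" by (simp add: gp_def)

lemma gp_image:
  assumes "inj_on e C" "\<forall>A\<in>S. A \<subseteq> C"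
  shows "gp (image e ` S) = gp S"
proof -
  have inj: "inj_on (image e) S"
  proof (rule inj_onI)
    fix A B assume "A \<in> S" "B \<in> S" "e ` A = e ` B"
    then show "A = B" using inj_on_image_eq_iff[OF assms(1)] assms(2) by blast
  qed
  have "gp (image e ` S) = (\<Sum>A\<in>S. monom 1 (card (e ` A)))"
    unfolding gp_def by (simp add: sum.reindex[OF inj])
  also have "\<dots> = gp S" unfolding gp_def
    using assms by (auto intro!: sum.cong simp: card_image inj_on_subset)
  finally show ?thesis .
qed

definition U :: "'a set \<times> 'a set \<Rightarrow> 'a set" where "U = (\<lambda>(A,B). A \<union> B)"

lemma gp_prod:
  assumes "finite X" "finite Y" "X \<inter> Y = {}" "\<forall>A\<in>S. A \<subseteq> X" "\<forall>B\<in>T. B \<subseteq> Y"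
    "finite S" "finite T"
  shows "gp (U ` (S \<times> T)) = gp S * gp T"
proof -
  have inj: "inj_on U (S \<times> T)"
  proof (rule inj_onI)
    fix a b assume a: "a \<in> S \<times> T" and b: "b \<in> S \<times> T" and e: "U a = U b"
    obtain A B where ab: "a = (A,B)" by (cases a)
    obtain A' B' where ab': "b = (A',B')" by (cases b)
    have "A = (A \<union> B) \<inter> X" "B = (A \<union> B) \<inter> Y" "A' = (A' \<union> B') \<inter> X" "B' = (A' \<union> B') \<inter> Y"
      using a b ab ab' assms(3,4,5) by blast+
    then show "a = b" using e ab ab' by (simp add: U_def)
  qed
  have "gp (U ` (S \<times> T)) = (\<Sum>x\<in>S \<times> T. monom 1 (card (U x)))"
    unfolding gp_def by (simp add: sum.reindex[OF inj])
  also have "\<dots> = (\<Sum>A\<in>S. \<Sum>B\<in>T. monom (1::int) (card A) * monom 1 (card B))"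
    unfolding sum.cartesian_product
  proof (rule sum.cong[OF refl])
    fix x assume x: "x \<in> S \<times> T"
    obtain A B where ab: "x = (A,B)" by (cases x)
    have "finite A" "finite B" "A \<inter> B = {}" using x ab assms finite_subset by fastforce+
    then show "monom (1::int) (card (U x)) = (case x of (A, B) \<Rightarrow> monom 1 (card A) * monom 1 (card B))"
      by (simp add: ab U_def card_Un_disjoint mult_monom)
  qed
  also have "\<dots> = gp S * gp T" unfolding gp_def by (simp add: sum_product)
  finally show ?thesis .
qed

lemma mem_U_image: "x \<in> U ` (S \<times> T) \<longleftrightarrow> (\<exists>a\<in>S. \<exists>b\<in>T. x = a \<union> b)"
  by (auto simp: U_def)

lemma U_imageE: "x \<in> U ` (S \<times> T) \<Longrightarrow> (\<And>a b. a \<in> S \<Longrightarrow> b \<in> T \<Longrightarrow> x = a \<union> b \<Longrightarrow> P) \<Longrightarrow> P"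
  by (auto simp: U_def)

lemma U_imageI: "a \<in> S \<Longrightarrow> b \<in> T \<Longrightarrow> a \<union> b \<in> U ` (S \<times> T)"
  by (rule rev_image_eqI[of "(a,b)"]) (auto simp: U_def)

lemma finite_U_image: "finite S \<Longrightarrow> finite T \<Longrightarrow> finite (U ` (S \<times> T))"
  by simp

fun F :: "nat \<Rightarrow> int poly" where
  "F 0 = 0"
| "F (Suc 0) = 1"
| "F (Suc (Suc k)) = F (Suc k) + monom 1 1 * F k"

definition noadj :: "nat set \<Rightarrow> bool" where
  "noadj J \<longleftrightarrow> (\<forall>k\<in>J. Suc k \<notin> J)"

definition Fam :: "nat \<Rightarrow> nat \<Rightarrow> nat set set" where
  "Fam lo hi = {J. J \<subseteq> {lo..<hi} \<and> noadj J}"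

lemma finite_Fam: "finite (Fam lo hi)"
proof -
  have "Fam lo hi \<subseteq> Pow {lo..<hi}" by (auto simp: Fam_def)
  then show ?thesis by (rule finite_subset) simp
qed

lemma Fam_triv: "hi \<le> lo \<Longrightarrow> Fam lo hi = {{}}"
  by (auto simp: Fam_def noadj_def)

lemma Fam_step:
  assumes "lo \<le> h"
  shows "Fam lo (Suc (Suc h)) = Fam lo (Suc h) \<union> U ` (Fam lo h \<times> {{Suc h}})"
proof (rule set_eqI)
  fix J
  show "J \<in> Fam lo (Suc (Suc h)) \<longleftrightarrow> J \<in> Fam lo (Suc h) \<union> U ` (Fam lo h \<times> {{Suc h}})"
  proof
    assume J: "J \<in> Fam lo (Suc (Suc h))"
    then have Jsub: "J \<subseteq> {lo..<Suc (Suc h)}" and Jn: "noadj J" by (simp_all add: Fam_def)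
    show "J \<in> Fam lo (Suc h) \<union> U ` (Fam lo h \<times> {{Suc h}})"
    proof (cases "Suc h \<in> J")
      case False
      have "J \<subseteq> {lo..<Suc h}"
      proof
        fix x assume "x \<in> J"
        then have "lo \<le> x" "x < Suc (Suc h)" "x \<noteq> Suc h" using Jsub False by auto
        then show "x \<in> {lo..<Suc h}" by simp
      qed
      then have "J \<in> Fam lo (Suc h)" using Jn by (simp add: Fam_def)
      then show ?thesis by blast
    next
      case True
      then have hJ: "h \<notin> J" using Jn unfolding noadj_def by blast
      have "J - {Suc h} \<subseteq> {lo..<h}"
      proof
        fix x assume "x \<in> J - {Suc h}"
        then have "lo \<le> x" "x < Suc (Suc h)" "x \<noteq> Suc h" "x \<noteq> h" using Jsub hJ by auto
        then show "x \<in> {lo..<h}" by simp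
      qed
      moreover have "noadj (J - {Suc h})" using Jn unfolding noadj_def by blast
      ultimately have "J - {Suc h} \<in> Fam lo h" by (simp add: Fam_def)
      moreover have "J = (J - {Suc h}) \<union> {Suc h}" using True by blast
      ultimately have "J \<in> U ` (Fam lo h \<times> {{Suc h}})" unfolding mem_U_image by blast
      then show ?thesis by (rule UnI2)
    qed
  next
    assume "J \<in> Fam lo (Suc h) \<union> U ` (Fam lo h \<times> {{Suc h}})"
    then show "J \<in> Fam lo (Suc (Suc h))"
    proof
      assume "J \<in> Fam lo (Suc h)"
      then have "J \<subseteq> {lo..<Suc h}" "noadj J" by (simp_all add: Fam_def)
      moreover have "{lo..<Suc h} \<subseteq> {lo..<Suc (Suc h)}" by auto
      ultimately show ?thesis unfolding Fam_def by blast
    next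
      assume "J \<in> U ` (Fam lo h \<times> {{Suc h}})"
      then obtain A where A: "A \<in> Fam lo h" "J = A \<union> {Suc h}" unfolding mem_U_image by blast
      from A(1) have As: "A \<subseteq> {lo..<h}" and An: "noadj A" by (simp_all add: Fam_def)
      have "J \<subseteq> {lo..<Suc (Suc h)}"
      proof
        fix x assume "x \<in> J"
        then have "x \<in> A \<or> x = Suc h" using A by blast
        then show "x \<in> {lo..<Suc (Suc h)}" using As assms by force
      qed
      moreover have "noadj J"
        unfolding noadj_def
      proof
        fix k assume k: "k \<in> J"
        show "Suc k \<notin> J"
        proof (cases "k = Suc h")
          case True
          have "Suc (Suc h) \<notin> A" using As by force
          then show ?thesis using A True by simp
        next
          case False
          then have kA: "k \<in> A" using k A by blast
          then have "k < h" using As by force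
          then have "Suc k \<noteq> Suc h" by simp
          moreover have "Suc k \<notin> A" using kA An unfolding noadj_def by blast
          ultimately show ?thesis using A by blast
        qed
      qed
      ultimately show ?thesis by (simp add: Fam_def)
    qed
  qed
qed

lemma gp_Fam_aux: "gp (Fam lo (lo + m)) = F (m + 2)"
proof (induct m rule: F.induct)
  case 1
  then show ?case by (simp add: Fam_triv)
next
  case 2
  have "Fam lo (lo + Suc 0) = {{}, {lo}}" by (auto simp: Fam_def noadj_def)
  then show ?case by (simp add: numeral_2_eq_2 gp_def monom_0)
next
  case (3 k)
  have e: "Fam lo (lo + Suc (Suc k)) = Fam lo (Suc (lo + k)) \<union> U ` (Fam lo (lo + k) \<times> {{Suc (lo + k)}})"
    using Fam_step[of lo "lo + k"] by simp
  have d: "Fam lo (Suc (lo + k)) \<inter> U ` (Fam lo (lo + k) \<times> {{Suc (lo + k)}}) = {}"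
    by (auto simp: U_def Fam_def)
  have p: "gp (U ` (Fam lo (lo + k) \<times> {{Suc (lo + k)}})) = gp (Fam lo (lo + k)) * gp {{Suc (lo + k)}}"
    by (rule gp_prod[where X = "{lo..<lo+k}" and Y = "{Suc (lo+k)}"]) (auto simp: Fam_def finite_Fam)
  have "gp (Fam lo (lo + Suc (Suc k))) = F (Suc k + 2) + F (k + 2) * monom 1 1"
    unfolding e using 3 p by (simp add: gp_union finite_Fam d)
  then show ?case by (simp add: numeral_2_eq_2 mult.commute)
qed

lemma gp_Fam: "lo \<le> hi + 1 \<Longrightarrow> gp (Fam lo hi) = F (hi + 2 - lo)"
proof (cases "lo \<le> hi")
  case True
  then show ?thesis using gp_Fam_aux[of lo "hi - lo"] by (simp add: Suc_diff_le)
next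
  case False
  assume "lo \<le> hi + 1"
  with False have "hi + 2 - lo = 1" by simp
  then show ?thesis using False by (simp add: Fam_triv)
qed

lemma noadj_subset: "noadj J \<Longrightarrow> A \<subseteq> J \<Longrightarrow> noadj A"
  unfolding noadj_def by blast

lemma Fam_pt:
  assumes "lo \<le> u" "u < hi" "S \<subseteq> {Suc (Suc u)..<hi}"
  shows "{J\<in>Fam lo hi. u\<in>J \<and> S\<subseteq>J} =
    U ` (U ` (Fam lo (u - 1) \<times> {{u}}) \<times> {B\<in>Fam (Suc (Suc u)) hi. S \<subseteq> B})"
proof (rule set_eqI)
  fix J
  show "J \<in> {J\<in>Fam lo hi. u\<in>J \<and> S\<subseteq>J} \<longleftrightarrow>
    J \<in> U ` (U ` (Fam lo (u - 1) \<times> {{u}}) \<times> {B\<in>Fam (Suc (Suc u)) hi. S \<subseteq> B})"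
  proof
    assume "J \<in> {J\<in>Fam lo hi. u\<in>J \<and> S\<subseteq>J}"
    then have Js: "J \<subseteq> {lo..<hi}" and Jn: "noadj J" and uJ: "u \<in> J" and SJ: "S \<subseteq> J"
      by (simp_all add: Fam_def)
    define A where "A = {k\<in>J. k < u}"
    define B where "B = {k\<in>J. u < k}"
    have "A \<subseteq> {lo..<u - 1}"
    proof
      fix x assume x: "x \<in> A"
      then have xJ: "x \<in> J" and xu: "x < u" by (simp_all add: A_def)
      have "Suc x \<noteq> u" using Jn xJ uJ unfolding noadj_def by blast
      then show "x \<in> {lo..<u - 1}" using xu Js xJ by force
    qed
    moreover have "noadj A" using Jn by (rule noadj_subset) (auto simp: A_def)
    ultimately have AF: "A \<in> Fam lo (u - 1)" by (simp add: Fam_def)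
    have "B \<subseteq> {Suc (Suc u)..<hi}"
    proof
      fix x assume x: "x \<in> B"
      then have xJ: "x \<in> J" and xu: "u < x" by (simp_all add: B_def)
      have "Suc u \<notin> J" using Jn uJ unfolding noadj_def by blast
      then have "x \<noteq> Suc u" using xJ by blast
      then show "x \<in> {Suc (Suc u)..<hi}" using xu Js xJ by force
    qed
    moreover have "noadj B" using Jn by (rule noadj_subset) (auto simp: B_def)
    moreover have "S \<subseteq> B" using SJ assms(3) by (force simp: B_def)
    ultimately have BF: "B \<in> {B\<in>Fam (Suc (Suc u)) hi. S \<subseteq> B}" by (simp add: Fam_def)
    have "J = (A \<union> {u}) \<union> B" using uJ by (auto simp: A_def B_def)
    moreover have "A \<union> {u} \<union> B \<in> U ` (U ` (Fam lo (u - 1) \<times> {{u}}) \<times> {B\<in>Fam (Suc (Suc u)) hi. S \<subseteq> B})"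
      using AF BF by (intro U_imageI) simp_all
    ultimately show "J \<in> U ` (U ` (Fam lo (u - 1) \<times> {{u}}) \<times> {B\<in>Fam (Suc (Suc u)) hi. S \<subseteq> B})"
      by simp
  next
    assume "J \<in> U ` (U ` (Fam lo (u - 1) \<times> {{u}}) \<times> {B\<in>Fam (Suc (Suc u)) hi. S \<subseteq> B})"
    then obtain a B where a: "a \<in> U ` (Fam lo (u - 1) \<times> {{u}})" and B: "B \<in> Fam (Suc (Suc u)) hi" "S \<subseteq> B"
      and J0: "J = a \<union> B"
      by (rule U_imageE) blast+
    from a obtain A where A: "A \<in> Fam lo (u - 1)" and aA: "a = A \<union> {u}"
      by (rule U_imageE) blast+
    from J0 aA have J: "J = (A \<union> {u}) \<union> B" by simp
    from A have As: "A \<subseteq> {lo..<u - 1}" and An: "noadj A" by (simp_all add: Fam_def)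
    from B have Bs: "B \<subseteq> {Suc (Suc u)..<hi}" and Bn: "noadj B" by (simp_all add: Fam_def)
    have "J \<subseteq> {lo..<hi}"
    proof
      fix x assume "x \<in> J"
      then consider "x \<in> A" | "x = u" | "x \<in> B" using J by blast
      then show "x \<in> {lo..<hi}"
      proof cases
        case 1 then show ?thesis using As assms(1,2) using subsetD[OF As] by force
      next
        case 2 then show ?thesis using assms(1,2) by auto
      next
        case 3 then show ?thesis using subsetD[OF Bs] assms(1) by force
      qed
    qed
    moreover have "noadj J"
      unfolding noadj_def
    proof
      fix k assume "k \<in> J"
      then consider "k \<in> A" | "k = u" | "k \<in> B" using J by blast
      then show "Suc k \<notin> J"
      proof cases
        case 1
        then have "Suc k \<notin> A" using An unfolding noadj_def by blast
        moreover have "Suc k < u" using 1 subsetD[OF As] by force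
        moreover have "\<forall>b\<in>B. u < b" using Bs by force
        ultimately show ?thesis using J by force
      next
        case 2
        have "\<forall>a\<in>A. a < u" using As by force
        moreover have "Suc u \<notin> B" using Bs by force
        ultimately show ?thesis using J 2 by force
      next
        case 3
        then have "Suc k \<notin> B" using Bn unfolding noadj_def by blast
        moreover have "u < k" using 3 Bs by force
        moreover have "\<forall>a\<in>A. a < u" using As by force
        ultimately show ?thesis using J by force
      qed
    qed
    moreover have "S \<subseteq> J" "u \<in> J" using J B(2) by blast+
    ultimately show "J \<in> {J\<in>Fam lo hi. u\<in>J \<and> S\<subseteq>J}" by (simp add: Fam_def)
  qed
qed

lemma finite_FamC: "finite {B\<in>Fam lo hi. P B}"
  by (rule finite_subset[OF _ finite_Fam]) blast

lemma gp_pt: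
  assumes "lo \<le> u" "u < hi" "S \<subseteq> {Suc (Suc u)..<hi}"
  shows "gp {J\<in>Fam lo hi. u\<in>J \<and> S\<subseteq>J} =
    gp (Fam lo (u - 1)) * monom 1 1 * gp {B\<in>Fam (Suc (Suc u)) hi. S \<subseteq> B}"
proof -
  have i: "gp (U ` (Fam lo (u - 1) \<times> {{u}})) = gp (Fam lo (u - 1)) * gp {{u}}"
    by (rule gp_prod[where X = "{lo..<u-1}" and Y = "{u}"]) (auto simp: Fam_def finite_Fam)
  have o: "gp (U ` (U ` (Fam lo (u - 1) \<times> {{u}}) \<times> {B\<in>Fam (Suc (Suc u)) hi. S \<subseteq> B}))
     = gp (U ` (Fam lo (u - 1) \<times> {{u}})) * gp {B\<in>Fam (Suc (Suc u)) hi. S \<subseteq> B}"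
  proof (rule gp_prod[where X = "{lo..<Suc u}" and Y = "{Suc (Suc u)..<hi}"])
    show "\<forall>A\<in>U ` (Fam lo (u - 1) \<times> {{u}}). A \<subseteq> {lo..<Suc u}"
    proof
      fix A assume "A \<in> U ` (Fam lo (u - 1) \<times> {{u}})"
      then obtain a b where "a \<in> Fam lo (u - 1)" "b \<in> {{u}}" "A = a \<union> b" by (rule U_imageE)
      then have "a \<subseteq> {lo..<u-1}" "b = {u}" "A = a \<union> b" by (simp_all add: Fam_def)
      moreover have "{lo..<u-1} \<subseteq> {lo..<Suc u}" "u \<in> {lo..<Suc u}" using assms(1) by auto
      ultimately show "A \<subseteq> {lo..<Suc u}" by blast
    qed
  qed (auto simp: Fam_def finite_Fam finite_FamC)
  show ?thesis unfolding Fam_pt[OF assms] o i by simp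
qed

lemma nonneg_F: "nonneg (F n)"
  by (induct n rule: F.induct) (auto intro!: nonneg_add nonneg_mult nonneg_monom simp: nonneg_0 nonneg_1)

lemma V_id: "F a * F (a+e+1) - F (a+1) * F (a+e) = (-1)^(a+1) * monom 1 a * F e"
proof (induct a)
  case 0
  then show ?case by (simp add: monom_0 one_pCons)
next
  case (Suc a)
  have e1: "Suc a + e + 1 = Suc (Suc (a+e))" and e2: "Suc a + 1 = Suc (Suc a)" and e3: "Suc a + e = Suc (a + e)" by simp_all
  have "F (Suc a) * F (Suc a + e + 1) - F (Suc a + 1) * F (Suc a + e)
      = - (monom 1 1 * (F a * F (a+e+1) - F (a+1) * F (a+e)))"
    unfolding e1 e2 e3 by (simp add: algebra_simps)
  also have "\<dots> = - (monom 1 1 * ((-1)^(a+1) * monom 1 a * F e))" using Suc by simp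
  also have "\<dots> = (-1)^(Suc a+1) * monom 1 (Suc a) * F e"
    by (simp add: mult_monom algebra_simps)
  finally show ?case .
qed

lemma Id2: "F m * F (m+d+2) - F (m+2) * F (m+d) = (-1)^(m+1) * monom 1 m * F d"
proof (cases d)
  case 0
  then show ?thesis by (simp add: mult.commute)
next
  case (Suc d')
  have v1: "F m * F (m+(d'+2)+1) - F (m+1) * F (m+(d'+2)) = (-1)^(m+1) * monom 1 m * F (d'+2)"
    by (rule V_id)
  have v2: "F (m+1) * F ((m+1)+d'+1) - F ((m+1)+1) * F ((m+1)+d') = (-1)^(m+1+1) * monom 1 (m+1) * F d'"
    by (rule V_id)
  have "F m * F (m+d+2) - F (m+2) * F (m+d)
     = (F m * F (m+(d'+2)+1) - F (m+1) * F (m+(d'+2))) + (F (m+1) * F ((m+1)+d'+1) - F ((m+1)+1) * F ((m+1)+d'))"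
    using Suc by (simp add: algebra_simps)
  also have "\<dots> = (-1)^(m+1) * monom 1 m * (F (d'+2) - monom 1 1 * F d')"
    unfolding v1 v2 by (simp add: mult_monom algebra_simps)
  also have "F (d'+2) - monom 1 1 * F d' = F d"
    using Suc by (simp add: numeral_2_eq_2)
  finally show ?thesis .
qed

lemma key_ineq:
  assumes "1 \<le> p" "1 \<le> q" "(odd p \<and> p \<le> q) \<or> (even q \<and> q \<le> p)"
  shows "nonneg (F (p+1) * F (q-1) - F (p-1) * F (q+1))"
  using assms(3)
proof
  assume h: "odd p \<and> p \<le> q"
  have "F (p-1) * F ((p-1)+(q-p)+2) - F ((p-1)+2) * F ((p-1)+(q-p)) = (-1)^((p-1)+1) * monom 1 (p-1) * F (q-p)"
    by (rule Id2)
  moreover have "(p-1)+(q-p)+2 = q+1" "(p-1)+2 = p+1" "(p-1)+(q-p) = q-1" "(p-1)+1 = p" using h assms by auto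
  ultimately have "F (p-1) * F (q+1) - F (p+1) * F (q-1) = (-1)^p * monom 1 (p-1) * F (q-p)" by simp
  moreover have "(-1)^p = (-1::int poly)" using h by simp
  ultimately have "F (p+1) * F (q-1) - F (p-1) * F (q+1) = monom 1 (p-1) * F (q-p)"
    by (simp add: algebra_simps)
  then show ?thesis by (simp add: nonneg_mult nonneg_monom nonneg_F)
next
  assume h: "even q \<and> q \<le> p"
  have "F (q-1) * F ((q-1)+(p-q)+2) - F ((q-1)+2) * F ((q-1)+(p-q)) = (-1)^((q-1)+1) * monom 1 (q-1) * F (p-q)"
    by (rule Id2)
  moreover have "(q-1)+(p-q)+2 = p+1" "(q-1)+2 = q+1" "(q-1)+(p-q) = p-1" "(q-1)+1 = q" using h assms by auto
  ultimately have "F (q-1) * F (p+1) - F (q+1) * F (p-1) = (-1)^q * monom 1 (q-1) * F (p-q)" by simp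
  moreover have "(-1)^q = (1::int poly)" using h by simp
  ultimately have "F (p+1) * F (q-1) - F (p-1) * F (q+1) = monom 1 (q-1) * F (p-q)"
    by (simp add: algebra_simps)
  then show ?thesis by (simp add: nonneg_mult nonneg_monom nonneg_F)
qed




lemma decomp:
  assumes finV: "finite V" and PV: "P \<subseteq> V" and v0: "v0 \<in> P" and zP: "z \<in> P"
    and sep: "\<forall>a\<in>P - {v0}. \<forall>w\<in>V - P. \<not> E a w \<and> \<not> E w a"
  shows "gp {I. indep_set V E I \<and> z \<in> I} =
    gp {J. indep_set P E J \<and> z \<in> J \<and> v0 \<in> J} * gp {K. indep_set (V - P) E K \<and> (\<forall>w\<in>K. \<not> E v0 w \<and> \<not> E w v0)}
  + gp {J. indep_set P E J \<and> z \<in> J \<and> v0 \<notin> J} * gp {K. indep_set (V - P) E K}"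
proof -
  let ?Ji = "{J. indep_set P E J \<and> z \<in> J \<and> v0 \<in> J}"
  let ?Jo = "{J. indep_set P E J \<and> z \<in> J \<and> v0 \<notin> J}"
  let ?Ki = "{K. indep_set (V - P) E K \<and> (\<forall>w\<in>K. \<not> E v0 w \<and> \<not> E w v0)}"
  let ?K = "{K. indep_set (V - P) E K}"
  have finP: "finite P" using finV PV by (rule finite_subset[rotated])
  have fPow: "finite (Pow A)" if "finite A" for A :: "'a set" using that by simp
  have fJi: "finite ?Ji" by (rule finite_subset[OF _ fPow[OF finP]]) (auto simp: indep_set_def)
  have fJo: "finite ?Jo" by (rule finite_subset[OF _ fPow[OF finP]]) (auto simp: indep_set_def)
  have fKi: "finite ?Ki" by (rule finite_subset[OF _ fPow[of "V - P"]]) (auto simp: indep_set_def finV)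
  have fK: "finite ?K" by (rule finite_subset[OF _ fPow[of "V - P"]]) (auto simp: indep_set_def finV)
  have eq: "{I. indep_set V E I \<and> z \<in> I} = U ` (?Ji \<times> ?Ki) \<union> U ` (?Jo \<times> ?K)"
  proof (rule set_eqI)
    fix I
    show "I \<in> {I. indep_set V E I \<and> z \<in> I} \<longleftrightarrow> I \<in> U ` (?Ji \<times> ?Ki) \<union> U ` (?Jo \<times> ?K)"
    proof
      assume "I \<in> {I. indep_set V E I \<and> z \<in> I}"
      then have IV: "I \<subseteq> V" and Ii: "\<forall>a\<in>I. \<forall>b\<in>I. \<not> E a b" and zI: "z \<in> I"
        by (auto simp: indep_set_def)
      have IJK: "I = (I \<inter> P) \<union> (I - P)" by blast
      have J: "indep_set P E (I \<inter> P)" using Ii by (auto simp: indep_set_def)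
      have K: "indep_set (V - P) E (I - P)" using Ii IV by (auto simp: indep_set_def)
      show "I \<in> U ` (?Ji \<times> ?Ki) \<union> U ` (?Jo \<times> ?K)"
      proof (cases "v0 \<in> I")
        case True
        have "I \<inter> P \<in> ?Ji" using J zI zP True v0 by simp
        moreover have "I - P \<in> ?Ki" using K Ii True by simp
        ultimately have "(I \<inter> P) \<union> (I - P) \<in> U ` (?Ji \<times> ?Ki)" by (rule U_imageI)
        then show ?thesis using IJK by simp
      next
        case False
        have "I \<inter> P \<in> ?Jo" using J zI zP False by simp
        moreover have "I - P \<in> ?K" using K by simp
        ultimately have "(I \<inter> P) \<union> (I - P) \<in> U ` (?Jo \<times> ?K)" by (rule U_imageI)
        then show ?thesis using IJK by simp
      qed
    next
      have gen: "indep_set V E (J \<union> K) \<and> z \<in> J \<union> K"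
        if J: "indep_set P E J" "z \<in> J" and K: "indep_set (V - P) E K"
          and c: "v0 \<in> J \<Longrightarrow> (\<forall>w\<in>K. \<not> E v0 w \<and> \<not> E w v0)" for J K
      proof -
        have JP: "J \<subseteq> P" and KP: "K \<subseteq> V - P" using J K by (auto simp: indep_set_def)
        have "\<not> E a b" if a: "a \<in> J \<union> K" and b: "b \<in> J \<union> K" for a b
        proof -
          consider "a \<in> J" "b \<in> J" | "a \<in> K" "b \<in> K" | "a \<in> J" "b \<in> K" | "a \<in> K" "b \<in> J"
            using a b by blast
          then show ?thesis
          proof cases
            case 1 then show ?thesis using J by (auto simp: indep_set_def)
          next
            case 2 then show ?thesis using K by (auto simp: indep_set_def)
          next
            case 3
            show ?thesis
            proof (cases "a = v0")
              case True then show ?thesis using c 3 by blast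
            next
              case False then show ?thesis using sep 3 JP KP by blast
            qed
          next
            case 4
            show ?thesis
            proof (cases "b = v0")
              case True then show ?thesis using c 4 by blast
            next
              case False then show ?thesis using sep 4 JP KP by blast
            qed
          qed
        qed
        moreover have "J \<union> K \<subseteq> V" using JP KP PV by blast
        ultimately show ?thesis using J(2) by (auto simp: indep_set_def)
      qed
      assume "I \<in> U ` (?Ji \<times> ?Ki) \<union> U ` (?Jo \<times> ?K)"
      then show "I \<in> {I. indep_set V E I \<and> z \<in> I}"
      proof
        assume "I \<in> U ` (?Ji \<times> ?Ki)"
        then obtain J K where "J \<in> ?Ji" "K \<in> ?Ki" "I = J \<union> K" by (rule U_imageE)
        then show ?thesis using gen[of J K] by simp
      next
        assume "I \<in> U ` (?Jo \<times> ?K)"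
        then obtain J K where "J \<in> ?Jo" "K \<in> ?K" "I = J \<union> K" by (rule U_imageE)
        then show ?thesis using gen[of J K] by simp
      qed
    qed
  qed
  have disj: "U ` (?Ji \<times> ?Ki) \<inter> U ` (?Jo \<times> ?K) = {}"
  proof (rule ccontr)
    assume "U ` (?Ji \<times> ?Ki) \<inter> U ` (?Jo \<times> ?K) \<noteq> {}"
    then obtain I where I1: "I \<in> U ` (?Ji \<times> ?Ki)" and I2: "I \<in> U ` (?Jo \<times> ?K)" by blast
    from I1 obtain J K where "J \<in> ?Ji" "K \<in> ?Ki" "I = J \<union> K" by (rule U_imageE)
    then have "v0 \<in> I" by simp
    from I2 obtain J' K' where "J' \<in> ?Jo" "K' \<in> ?K" "I = J' \<union> K'" by (rule U_imageE)
    then have "v0 \<notin> I" using v0 by (auto simp: indep_set_def)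
    with \<open>v0 \<in> I\<close> show False by simp
  qed
  have s1: "\<forall>A\<in>?Ji. A \<subseteq> P" "\<forall>A\<in>?Jo. A \<subseteq> P" "\<forall>A\<in>?Ki. A \<subseteq> V - P" "\<forall>A\<in>?K. A \<subseteq> V - P"
    by (simp_all add: indep_set_def)
  have fVP: "finite (V - P)" using finV by simp
  have dVP: "P \<inter> (V - P) = {}" by blast
  have p1: "gp (U ` (?Ji \<times> ?Ki)) = gp ?Ji * gp ?Ki"
    by (rule gp_prod[OF finP fVP dVP s1(1) s1(3) fJi fKi])
  have p2: "gp (U ` (?Jo \<times> ?K)) = gp ?Jo * gp ?K"
    by (rule gp_prod[OF finP fVP dVP s1(2) s1(4) fJo fK])
  have f1: "finite (U ` (?Ji \<times> ?Ki))" using fJi fKi by simp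
  have f2: "finite (U ` (?Jo \<times> ?K))" using fJo fK by simp
  show ?thesis unfolding eq gp_union[OF f1 f2 disj] p1 p2 ..
qed

definition noadjE :: "(nat \<Rightarrow> 'a) \<Rightarrow> ('a \<Rightarrow> 'a \<Rightarrow> bool) \<Rightarrow> nat set \<Rightarrow> bool" where
  "noadjE e E D \<longleftrightarrow> (\<forall>a\<in>D. \<forall>b\<in>D. E (e a) (e b) \<longleftrightarrow> (b = Suc a \<or> a = Suc b))"

lemma transfer:
  assumes inj: "inj_on e {lo..<hi}" and ad: "noadjE e E {lo..<hi}"
  shows "gp {I. indep_set (e ` {lo..<hi}) E I \<and> Q I} = gp {J\<in>Fam lo hi. Q (e ` J)}"
proof -
  have "{I. indep_set (e ` {lo..<hi}) E I \<and> Q I} = image e ` {J\<in>Fam lo hi. Q (e ` J)}"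
  proof (rule set_eqI)
    fix I
    show "I \<in> {I. indep_set (e ` {lo..<hi}) E I \<and> Q I} \<longleftrightarrow> I \<in> image e ` {J\<in>Fam lo hi. Q (e ` J)}"
    proof
      assume "I \<in> {I. indep_set (e ` {lo..<hi}) E I \<and> Q I}"
      then have I1: "I \<subseteq> e ` {lo..<hi}" and I2: "\<forall>x\<in>I. \<forall>y\<in>I. \<not> E x y" and Q: "Q I"
        by (auto simp: indep_set_def)
      define J where "J = {k\<in>{lo..<hi}. e k \<in> I}"
      have IJ: "I = e ` J" using I1 by (auto simp: J_def)
      have "noadj J" unfolding noadj_def
      proof
        fix k assume k: "k \<in> J"
        show "Suc k \<notin> J"
        proof
          assume k2: "Suc k \<in> J"
          have "E (e k) (e (Suc k))" using ad k k2 by (auto simp: J_def noadjE_def)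
          then show False using I2 k k2 by (auto simp: J_def)
        qed
      qed
      moreover have "Q (e ` J)" using Q IJ by simp
      moreover have "J \<subseteq> {lo..<hi}" unfolding J_def by blast
      ultimately have "J \<in> {J\<in>Fam lo hi. Q (e ` J)}" by (simp add: Fam_def)
      then show "I \<in> image e ` {J\<in>Fam lo hi. Q (e ` J)}" using IJ by blast
    next
      assume "I \<in> image e ` {J\<in>Fam lo hi. Q (e ` J)}"
      then obtain J where J: "J \<in> Fam lo hi" "Q (e ` J)" "I = e ` J" by blast
      have Js: "J \<subseteq> {lo..<hi}" and Jn: "noadj J" using J(1) by (simp_all add: Fam_def)
      have "\<not> E x y" if xy: "x \<in> I" "y \<in> I" for x y
      proof -
        obtain a b where ab: "a \<in> J" "b \<in> J" "x = e a" "y = e b" using xy J(3) by blast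
        have "\<not> (b = Suc a \<or> a = Suc b)" using Jn ab unfolding noadj_def by blast
        then show ?thesis using ad ab Js unfolding noadjE_def by blast
      qed
      moreover have "I \<subseteq> e ` {lo..<hi}" using Js J(3) by blast
      ultimately show "I \<in> {I. indep_set (e ` {lo..<hi}) E I \<and> Q I}" using J by (simp add: indep_set_def)
    qed
  qed
  moreover have "gp (image e ` {J\<in>Fam lo hi. Q (e ` J)}) = gp {J\<in>Fam lo hi. Q (e ` J)}"
    by (rule gp_image[OF inj]) (auto simp: Fam_def)
  ultimately show ?thesis by simp
qed

lemma Fam_emp_sub: "{B\<in>Fam lo hi. {} \<subseteq> B} = Fam lo hi" by simp

lemma PX:
  assumes "1 \<le> n"
  shows "gp {J\<in>Fam 1 (n+1). 1\<in>J \<and> {}\<subseteq>J} = monom 1 1 * F n"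
proof -
  have "gp {J\<in>Fam 1 (n+1). 1\<in>J \<and> {}\<subseteq>J} = gp (Fam 1 (1 - 1)) * monom 1 1 * gp {B\<in>Fam (Suc (Suc 1)) (n+1). {} \<subseteq> B}"
    by (rule gp_pt) (use assms in auto)
  also have "\<dots> = monom 1 1 * gp (Fam 3 (n+1))" by (simp add: Fam_triv numeral_3_eq_3)
  also have "gp (Fam 3 (n+1)) = F n" using assms by (subst gp_Fam) auto
  finally show ?thesis .
qed

lemma PY:
  assumes "1 \<le> n"
  shows "gp {J\<in>Fam 1 (n+1). n\<in>J \<and> {}\<subseteq>J} = monom 1 1 * F n"
proof -
  have "gp {J\<in>Fam 1 (n+1). n\<in>J \<and> {}\<subseteq>J} = gp (Fam 1 (n - 1)) * monom 1 1 * gp {B\<in>Fam (Suc (Suc n)) (n+1). {} \<subseteq> B}"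
    by (rule gp_pt) (use assms in auto)
  also have "\<dots> = gp (Fam 1 (n - 1)) * monom 1 1" by (simp add: Fam_triv)
  also have "gp (Fam 1 (n - 1)) = F n" using assms by (subst gp_Fam) auto
  finally show ?thesis by (simp add: mult.commute)
qed

lemma PXin:
  assumes "1 \<le> p" "1 \<le> q" "n = p + q + 1"
  shows "gp {J\<in>Fam 1 (n+1). 1\<in>J \<and> {p+1}\<subseteq>J} = monom 1 1 * monom 1 1 * F (p - 1) * F (q + 1)"
proof (cases "p = 1")
  case True
  have E0: "{J\<in>Fam 1 (n+1). 1\<in>J \<and> {p+1}\<subseteq>J} = {}" using True by (auto simp: Fam_def noadj_def)
  show ?thesis unfolding E0 using True by simp
next
  case False
  then have p2: "2 \<le> p" using assms by simp
  have "gp {J\<in>Fam 1 (n+1). 1\<in>J \<and> {p+1}\<subseteq>J} = gp (Fam 1 (1 - 1)) * monom 1 1 * gp {B\<in>Fam (Suc (Suc 1)) (n+1). {p+1} \<subseteq> B}"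
    by (rule gp_pt) (use assms p2 in auto)
  also have "{B\<in>Fam (Suc (Suc 1)) (n+1). {p+1} \<subseteq> B} = {B\<in>Fam 3 (n+1). p+1 \<in> B \<and> {} \<subseteq> B}"
    by (simp add: numeral_3_eq_3)
  also have "gp \<dots> = gp (Fam 3 (p + 1 - 1)) * monom 1 1 * gp {B\<in>Fam (Suc (Suc (p+1))) (n+1). {} \<subseteq> B}"
    by (rule gp_pt) (use assms p2 in auto)
  also have "gp (Fam 3 (p + 1 - 1)) = F (p - 1)" using p2 by (subst gp_Fam) auto
  also have "gp {B\<in>Fam (Suc (Suc (p+1))) (n+1). {} \<subseteq> B} = F (q + 1)"
    unfolding Fam_emp_sub using assms by (subst gp_Fam) auto
  finally show ?thesis by (simp add: Fam_triv algebra_simps)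
qed

lemma PYin:
  assumes "1 \<le> p" "1 \<le> q" "n = p + q + 1"
  shows "gp {J\<in>Fam 1 (n+1). p+1\<in>J \<and> {n}\<subseteq>J} = monom 1 1 * monom 1 1 * F (p + 1) * F (q - 1)"
proof (cases "q = 1")
  case True
  have E0: "{J\<in>Fam 1 (n+1). p+1\<in>J \<and> {n}\<subseteq>J} = {}" using True assms by (auto simp: Fam_def noadj_def)
  show ?thesis unfolding E0 using True by simp
next
  case False
  then have q2: "2 \<le> q" using assms by simp
  have "gp {J\<in>Fam 1 (n+1). p+1\<in>J \<and> {n}\<subseteq>J} = gp (Fam 1 (p + 1 - 1)) * monom 1 1 * gp {B\<in>Fam (Suc (Suc (p+1))) (n+1). {n} \<subseteq> B}"
    by (rule gp_pt) (use assms q2 in auto)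
  also have "{B\<in>Fam (Suc (Suc (p+1))) (n+1). {n} \<subseteq> B} = {B\<in>Fam (Suc (Suc (p+1))) (n+1). n \<in> B \<and> {} \<subseteq> B}"
    by simp
  also have "gp \<dots> = gp (Fam (Suc (Suc (p+1))) (n - 1)) * monom 1 1 * gp {B\<in>Fam (Suc (Suc n)) (n+1). {} \<subseteq> B}"
    by (rule gp_pt) (use assms q2 in auto)
  also have "gp (Fam 1 (p + 1 - 1)) = F (p + 1)" by (subst gp_Fam) auto
  also have "gp (Fam (Suc (Suc (p+1))) (n - 1)) = F (q - 1)" using assms q2 by (subst gp_Fam) auto
  finally show ?thesis by (simp add: Fam_triv algebra_simps)
qed

definition emap :: "nat \<Rightarrow> nat \<Rightarrow> nat \<Rightarrow> nat \<Rightarrow> nat \<times> nat" where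
  "emap i j p k = (if k \<le> p then (i, p + 1 - k) else if k = p + 1 then (0,0) else (j, k - (p + 1)))"

lemma em_V:
  assumes "1 \<le> i" "i < j" "j \<le> length L" "L!(i-1) = p" "L!(j-1) = q" "1 \<le> p" "1 \<le> q" "n = p+q+1"
    and k: "k \<in> {1..<n+1}"
  shows "emap i j p k \<in> spider_verts L"
proof -
  have k1: "1 \<le> k" "k \<le> p + q + 1" using k assms(8) by auto
  consider "k \<le> p" | "k = p + 1" | "p + 1 < k" by linarith
  then show ?thesis
  proof cases
    case 1
    then have "1 \<le> p + 1 - k" "p + 1 - k \<le> L!(i-1)" using k1 assms(4) by auto
    then show ?thesis using 1 assms(1,2,3) by (simp add: emap_def spider_verts_def)
  next
    case 2 then show ?thesis by (simp add: emap_def spider_verts_def)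
  next
    case 3
    then have "1 \<le> k - (p + 1)" "k - (p + 1) \<le> L!(j-1)" using k1 assms(5) by auto
    then show ?thesis using 3 assms(1,2,3) by (simp add: emap_def spider_verts_def)
  qed
qed

lemma em_inj:
  assumes "1 \<le> i" "i < j"
  shows "inj_on (emap i j p) {1..<n+1}"
  using assms by (auto simp: inj_on_def emap_def split: if_splits)

lemma em_adj:
  assumes "1 \<le> i" "i < j" "j \<le> length L" "L!(i-1) = p" "L!(j-1) = q" "1 \<le> p" "1 \<le> q" "n = p+q+1"
  shows "noadjE (emap i j p) (spider_adj L) {1..<n+1}"
  unfolding noadjE_def
proof (intro ballI)
  fix a b assume a: "a \<in> {1..<n+1}" and b: "b \<in> {1..<n+1}"
  have "emap i j p a \<in> spider_verts L" "emap i j p b \<in> spider_verts L"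
    using em_V[OF assms a] em_V[OF assms b] by simp_all
  then have "spider_adj L (emap i j p a) (emap i j p b) \<longleftrightarrow>
     ((emap i j p a = (0,0) \<and> fst (emap i j p b) \<ge> 1 \<and> snd (emap i j p b) = 1) \<or>
      (emap i j p b = (0,0) \<and> fst (emap i j p a) \<ge> 1 \<and> snd (emap i j p a) = 1) \<or>
      (fst (emap i j p a) \<ge> 1 \<and> fst (emap i j p a) = fst (emap i j p b) \<and>
        (snd (emap i j p b) = snd (emap i j p a) + 1 \<or> snd (emap i j p a) = snd (emap i j p b) + 1)))"
    by (simp add: spider_adj_def)
  also have "\<dots> \<longleftrightarrow> (b = Suc a \<or> a = Suc b)"
    using assms(1,2,6,7,8) a b by (auto simp: emap_def split: if_splits)
  finally show "spider_adj L (emap i j p a) (emap i j p b) \<longleftrightarrow> (b = Suc a \<or> a = Suc b)" .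
qed

lemma em_sep:
  assumes "1 \<le> i" "i < j" "j \<le> length L" "L!(i-1) = p" "L!(j-1) = q" "1 \<le> p" "1 \<le> q" "n = p+q+1"
  shows "\<forall>a\<in>emap i j p ` {1..<n+1} - {(0,0)}. \<forall>w\<in>spider_verts L - emap i j p ` {1..<n+1}.
           \<not> spider_adj L a w \<and> \<not> spider_adj L w a"
proof (intro ballI)
  fix a w
  assume a: "a \<in> emap i j p ` {1..<n+1} - {(0,0)}" and w: "w \<in> spider_verts L - emap i j p ` {1..<n+1}"
  obtain k where k: "k \<in> {1..<n+1}" "a = emap i j p k" using a by blast
  have a0: "a \<noteq> (0,0)" using a by blast
  have fa: "fst a = i \<or> fst a = j" using k a0 by (auto simp: emap_def split: if_splits)
  have w0: "w \<noteq> (0,0)"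
  proof
    assume "w = (0,0)"
    moreover have "(0,0) \<in> emap i j p ` {1..<n+1}"
      by (rule rev_image_eqI[of "p+1"]) (use assms in \<open>auto simp: emap_def\<close>)
    ultimately show False using w by simp
  qed
  obtain l s where ls: "w = (l, s)" by (cases w)
  have wV: "1 \<le> l" "l \<le> length L" "1 \<le> s" "s \<le> L!(l-1)" using w w0 ls by (auto simp: spider_verts_def)
  have li: "l \<noteq> i"
  proof
    assume "l = i"
    then have "w \<in> emap i j p ` {1..<n+1}"
      using wV ls assms(4,6,7,8) by (intro rev_image_eqI[of "p + 1 - s"]) (auto simp: emap_def)
    then show False using w by simp
  qed
  have lj: "l \<noteq> j"
  proof
    assume "l = j"
    then have "w \<in> emap i j p ` {1..<n+1}"
      using wV ls assms(1,2,5,6,7,8) by (intro rev_image_eqI[of "p + 1 + s"]) (auto simp: emap_def)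
    then show False using w by simp
  qed
  show "\<not> spider_adj L a w \<and> \<not> spider_adj L w a"
    using a0 w0 fa li lj ls by (auto simp: spider_adj_def)
qed

lemma finite_spider: "finite (spider_verts L)"
proof -
  have "spider_verts L \<subseteq> insert (0,0) (SIGMA i:{1..length L}. {1..L!(i-1)})"
    by (auto simp: spider_verts_def)
  moreover have "finite (insert (0,0) (SIGMA i:{1..length L}. {1..L!(i-1)}))" by auto
  ultimately show ?thesis by (rule finite_subset)
qed

lemma order_cond:
  assumes "spider_order L" "1 \<le> i" "i < j" "j \<le> length L"
  shows "(odd (L!(i-1)) \<and> L!(i-1) \<le> L!(j-1)) \<or> (even (L!(j-1)) \<and> L!(j-1) \<le> L!(i-1))"
proof -
  have A: "(odd (L!(i-1)) \<and> odd (L!(j-1)) \<and> L!(i-1) < L!(j-1) \<longrightarrow> i < j) \<and>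
      (even (L!(i-1)) \<and> even (L!(j-1)) \<and> L!(i-1) < L!(j-1) \<longrightarrow> i > j) \<and>
      (odd (L!(i-1)) \<and> even (L!(j-1)) \<longrightarrow> i < j)"
    using assms unfolding spider_order_def by auto
  have B: "(odd (L!(j-1)) \<and> odd (L!(i-1)) \<and> L!(j-1) < L!(i-1) \<longrightarrow> j < i) \<and>
      (even (L!(j-1)) \<and> even (L!(i-1)) \<and> L!(j-1) < L!(i-1) \<longrightarrow> j > i) \<and>
      (odd (L!(j-1)) \<and> even (L!(i-1)) \<longrightarrow> j < i)"
    using assms unfolding spider_order_def by auto
  show ?thesis using A B assms(3) by auto
qed

lemma memJ: "inj_on e {1..<n+1} \<Longrightarrow> J \<in> Fam 1 (n+1) \<Longrightarrow> k \<in> {1..<n+1} \<Longrightarrow> (e k \<in> e ` J \<longleftrightarrow> k \<in> J)"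
  by (rule inj_on_image_mem_iff) (auto simp: Fam_def)

lemma main_ineq:
  fixes L :: "nat list" and t i j :: nat
  assumes "\<forall>l \<in> set L. l > 0"
    and "spider_order L"
    and "1 \<le> i" and "i < j" and "j \<le> length L"
  shows "card (indep_star (spider_verts L) (spider_adj L) t (i, L!(i-1)))
         \<ge> card (indep_star (spider_verts L) (spider_adj L) t (j, L!(j-1)))"
proof -
  define p where "p = L!(i-1)"
  define q where "q = L!(j-1)"
  define n where "n = p + q + 1"
  define e where "e = emap i j p"
  define D where "D = {1..<n+1}"
  define P where "P = e ` D"
  define V where "V = spider_verts L"
  define E where "E = spider_adj L"
  have "L!(i-1) \<in> set L" using assms(3,4,5) by (intro nth_mem) simp
  then have p1: "1 \<le> p" using assms(1) unfolding p_def by (simp add: Suc_le_eq)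
  have "L!(j-1) \<in> set L" using assms(3,4,5) by (intro nth_mem) simp
  then have q1: "1 \<le> q" using assms(1) unfolding q_def by (simp add: Suc_le_eq)
  note hyp = assms(3,4,5) p_def[symmetric] q_def[symmetric] p1 q1 n_def
  have inj: "inj_on e D" unfolding e_def D_def using em_inj[OF assms(3,4)] .
  have ad: "noadjE e E D" unfolding e_def D_def E_def by (rule em_adj[OF hyp])
  have sep: "\<forall>a\<in>P - {(0,0)}. \<forall>w\<in>V - P. \<not> E a w \<and> \<not> E w a"
    unfolding P_def e_def D_def V_def E_def by (rule em_sep[OF hyp])
  have PV: "P \<subseteq> V" unfolding P_def V_def e_def D_def using em_V[OF hyp] by blast
  have finV: "finite V" unfolding V_def by (rule finite_spider)
  have ex: "e 1 = (i, p)" and ey: "e n = (j, q)" and e0: "e (p+1) = (0,0)"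
    using p1 q1 by (auto simp: e_def emap_def n_def)
  have D1: "1 \<in> D" and Dn: "n \<in> D" and Dp: "p + 1 \<in> D" by (auto simp: D_def n_def)
  have xP: "(i,p) \<in> P" and yP: "(j,q) \<in> P" and v0P: "(0,0) \<in> P"
    unfolding P_def using D1 Dn Dp ex ey e0 by (metis image_eqI)+
  let ?K = "{K. indep_set (V - P) E K}"
  let ?Ki = "{K. indep_set (V - P) E K \<and> (\<forall>w\<in>K. \<not> E (0,0) w \<and> \<not> E w (0,0))}"
  have finP: "finite P" using PV finV by (rule finite_subset)
  have finPow: "finite {J. indep_set P E J \<and> R J}" for R
  proof (rule finite_subset[of _ "Pow P"])
    show "{J. indep_set P E J \<and> R J} \<subseteq> Pow P" by (auto simp: indep_set_def)
    show "finite (Pow P)" using finP by simp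
  qed
  have gout: "gp {J. indep_set P E J \<and> z \<in> J \<and> (0,0) \<notin> J} =
      gp {J. indep_set P E J \<and> z \<in> J \<and> True} - gp {J. indep_set P E J \<and> z \<in> J \<and> (0,0) \<in> J}" for z
  proof -
    have "{J. indep_set P E J \<and> z \<in> J \<and> (0,0) \<notin> J} =
      {J. indep_set P E J \<and> z \<in> J \<and> True} - {J. indep_set P E J \<and> z \<in> J \<and> (0,0) \<in> J}" by blast
    then show ?thesis by (simp only:) (rule gp_diff[OF finPow], blast)
  qed
  have tr: "gp {J. indep_set P E J \<and> (e a \<in> J \<and> (b \<longrightarrow> e c \<in> J))} = gp {J\<in>Fam 1 (n+1). a \<in> J \<and> (if b then {c} else {}) \<subseteq> J}"
    if "a \<in> D" "c \<in> D" for a b c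
  proof -
    have "gp {J. indep_set P E J \<and> (e a \<in> J \<and> (b \<longrightarrow> e c \<in> J))} = gp {J\<in>Fam 1 (n+1). e a \<in> e ` J \<and> (b \<longrightarrow> e c \<in> e ` J)}"
      unfolding P_def D_def by (rule transfer) (use inj ad in \<open>simp_all add: D_def\<close>)
    also have "{J\<in>Fam 1 (n+1). e a \<in> e ` J \<and> (b \<longrightarrow> e c \<in> e ` J)} = {J\<in>Fam 1 (n+1). a \<in> J \<and> (if b then {c} else {}) \<subseteq> J}"
      using memJ[of e n _ a] memJ[of e n _ c] inj that unfolding D_def by auto
    finally show ?thesis .
  qed
  have Gx: "gp {J. indep_set P E J \<and> (i,p) \<in> J \<and> True} = monom 1 1 * F n"
    using tr[OF D1 D1, of False] PX[of n] ex by (simp add: n_def)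
  have Gy: "gp {J. indep_set P E J \<and> (j,q) \<in> J \<and> True} = monom 1 1 * F n"
    using tr[OF Dn Dn, of False] PY[of n] ey by (simp add: n_def)
  have Gxin: "gp {J. indep_set P E J \<and> (i,p) \<in> J \<and> (0,0) \<in> J} = monom 1 1 * monom 1 1 * F (p - 1) * F (q + 1)"
    using tr[OF D1 Dp, of True] PXin[OF p1 q1 n_def] ex e0 by simp
  have Gyin: "gp {J. indep_set P E J \<and> (j,q) \<in> J \<and> (0,0) \<in> J} = monom 1 1 * monom 1 1 * F (p + 1) * F (q - 1)"
  proof -
    have "{J. indep_set P E J \<and> (j,q) \<in> J \<and> (0,0) \<in> J} = {J. indep_set P E J \<and> (e (p+1) \<in> J \<and> (True \<longrightarrow> e n \<in> J))}"
      using ey e0 by auto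
    then show ?thesis using tr[OF Dp Dn, of True] PYin[OF p1 q1 n_def] by simp
  qed
  have Sx: "gp {I. indep_set V E I \<and> (i,p) \<in> I} =
    gp {J. indep_set P E J \<and> (i,p) \<in> J \<and> (0,0) \<in> J} * gp ?Ki + gp {J. indep_set P E J \<and> (i,p) \<in> J \<and> (0,0) \<notin> J} * gp ?K"
    by (rule decomp[OF finV PV v0P xP sep])
  have Sy: "gp {I. indep_set V E I \<and> (j,q) \<in> I} =
    gp {J. indep_set P E J \<and> (j,q) \<in> J \<and> (0,0) \<in> J} * gp ?Ki + gp {J. indep_set P E J \<and> (j,q) \<in> J \<and> (0,0) \<notin> J} * gp ?K"
    by (rule decomp[OF finV PV v0P yP sep])
  have finK: "finite ?K"
  proof (rule finite_subset[of _ "Pow (V - P)"])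
    show "?K \<subseteq> Pow (V - P)" by (auto simp: indep_set_def)
    show "finite (Pow (V - P))" using finV by simp
  qed
  have Kd: "gp ?K - gp ?Ki = gp (?K - ?Ki)" by (rule gp_diff[OF finK, symmetric]) blast
  have diff: "gp {I. indep_set V E I \<and> (i,p) \<in> I} - gp {I. indep_set V E I \<and> (j,q) \<in> I}
     = (monom 1 1 * monom 1 1 * (F (p + 1) * F (q - 1) - F (p - 1) * F (q + 1))) * gp (?K - ?Ki)"
    unfolding Sx Sy gout Gx Gy Gxin Gyin Kd[symmetric] by (simp add: algebra_simps)
  have nn: "nonneg (gp {I. indep_set V E I \<and> (i,p) \<in> I} - gp {I. indep_set V E I \<and> (j,q) \<in> I})"
    unfolding diff
    by (intro nonneg_mult nonneg_monom nonneg_gp key_ineq p1 q1)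
       (use order_cond[OF assms(2,3,4,5)] in \<open>simp add: p_def q_def\<close>)
  have finS: "finite {I. indep_set V E I \<and> R I}" for R
  proof (rule finite_subset[of _ "Pow V"])
    show "{I. indep_set V E I \<and> R I} \<subseteq> Pow V" by (auto simp: indep_set_def)
    show "finite (Pow V)" using finV by simp
  qed
  have st: "indep_star V E t z = {I\<in>{I. indep_set V E I \<and> z \<in> I}. card I = t}" for z
    by (auto simp: indep_star_def indep_sets_of_size_def)
  have c: "coeff (gp {I. indep_set V E I \<and> (j,q) \<in> I}) t \<le> coeff (gp {I. indep_set V E I \<and> (i,p) \<in> I}) t"
    using nn unfolding nonneg_def by (simp add: algebra_simps)
  have "int (card (indep_star V E t (j,q))) \<le> int (card (indep_star V E t (i,p)))"
    using c unfolding st coeff_gp[OF finS] .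
  then show ?thesis unfolding V_def E_def p_def q_def by simp
qed


theorem theorem2p3:
  fixes L :: "nat list" and t i j :: nat
  assumes "length L \<ge> 1"
    and "\<forall>l \<in> set L. l > 0"
    and "spider_order L"
    and "1 \<le> t" and "t \<le> indep_number (spider_verts L) (spider_adj L)"
    and "1 \<le> i" and "i < j" and "j \<le> length L"
  shows "card (indep_star (spider_verts L) (spider_adj L) t (i, L!(i-1)))
         \<ge> card (indep_star (spider_verts L) (spider_adj L) t (j, L!(j-1)))"
  by (rule main_ineq[OF assms(2,3,6,7,8)])

end
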